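(* For a suitable realisation of a local affine Gaudin model (setting below), whose twist function $\varphi$ has simple zeros $\zeta_1,\dots,\zeta_M$, the momentum $\mathcal P_{\mathcal A}$ of the algebra of observables satisfies $\mathcal P_{\mathcal A}=\sum_{i=1}^M\mathcal Q_i$, where $\mathcal Q_i=-\frac{1}{2\varphi'(\zeta_i)}\int_{\mathbb D}dx\,\kappa\big(\Gamma(\zeta_i,x),\Gamma(\zeta_i,x)\big)$.
   Context: $\mathfrak g$: finite-dimensional simple complex Lie algebra, $\kappa$: minus its Killing form, $C_{12}=I_a\otimes I^a$ for dual bases w.r.t. $\kappa$; $\mathfrak g_0$: real form, fixed points of an antilinear involution $\tau$. $\mathbb D$ is $\mathbb R$ or the circle; $\delta'_{xy}=\partial_x\delta(x-y)$. Data: a finite set of sites $\Sigma=\Sigma_r\sqcup\Sigma_c\sqcup\bar\Sigma_c$ (real sites, complex sites, their conjugates $\bar\alpha$), multiplicities $m_\alpha\ge1$ ($m_{\bar\alpha}=m_\alpha$), levels $\ell^\alpha_{[p]}$, $0\le p\le m_\alpha-1$ (real for real sites, $\ell^{\bar\alpha}_{[p]}=\overline{\ell^\alpha_{[p]}}$), with $\ell^\alpha_{[m_\alpha-1]}\neq0$; pairwise distinct positions $z_\alpha$ (real for real sites, $z_{\bar\alpha}=\overline{z_\alpha}$); a real $\ell^\infty\neq0$. A realisation is a Poisson algebra $\mathcal A$ of local observables of a field theory on $\mathbb D$ containing $\mathfrak g$-valued fields $\mathcal J^\alpha_{[p]}(x)$ with $\{\mathcal J^\alpha_{[p]}{}_1(x),\mathcal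 J^\beta_{[q]}{}_2(y)\}=\delta_{\alpha\beta}([C_{12},\mathcal J^\alpha_{[p+q]}{}_1(x)]\delta_{xy}-\ell^\alpha_{[p+q]}C_{12}\delta'_{xy})$ if $p+q<m_\alpha$ and $0$ otherwise, $\tau(\mathcal J^\alpha_{[p]})=\mathcal J^\alpha_{[p]}$ for real $\alpha$ and $\tau(\mathcal J^\alpha_{[p]})=\mathcal J^{\bar\alpha}_{[p]}$ for complex $\alpha$. Twist function $\varphi(z)=\sum_{\alpha\in\Sigma}\sum_{p=0}^{m_\alpha-1}\frac{\ell^\alpha_{[p]}}{(z-z_\alpha)^{p+1}}-\ell^\infty$; Gaudin Lax matrix $\Gamma(z,x)=\sum_{\alpha}\sum_p\frac{\mathcal J^\alpha_{[p]}(x)}{(z-z_\alpha)^{p+1}}$; $M=\sum_\alpha m_\alpha$. For each $\alpha$, the numbers $\eta^\alpha_{[p]}$, $0\le p\le 2m_\alpha-2$, are the unique solution of $\sum_{p=0}^{m_\alpha-1-r}\eta^\alpha_{[p+q]}\ell^\alpha_{[p+r]}=\delta_{q,r}$ for all $q,r\in\{0,\dots,m_\alpha-1\}$, and $\mathcal D^\alpha_{[p]}=\frac12\sum_{q,r=0,\,q+r\ge p}^{m_\alpha-1}\eta^\alpha_{[q+r-p]}\int_{\mathbb D}dx\,\kappa(\mathcal J^\alpha_{[q]}(x),\mathcal J^\alpha_{[r]}(x))$. The momentum $\mathcal P_{\mathcal A}$ of $\mathcal A$ is the charge whose Hamiltonian flow $\{\mathcal P_{\mathcal A},\cdot\}$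 is $\partial_x$ on all fields of $\mathcal A$. The realisation is called suitable if $\sum_{\alpha\in\Sigma}\mathcal D^\alpha_{[0]}=\mathcal P_{\mathcal A}$. *)

theory Defs
  imports "HOL-Analysis.Analysis"
begin

definition lb :: "('n::finite \<Rightarrow> 'n \<Rightarrow> 'n \<Rightarrow> complex) \<Rightarrow> complex^'n \<Rightarrow> complex^'n \<Rightarrow> complex^'n" where
  "lb C x y = (\<chi> k. \<Sum>i\<in>UNIV. \<Sum>j\<in>UNIV. x$i * y$j * C i j k)"

definition lie_algebra :: "('n::finite \<Rightarrow> 'n \<Rightarrow> 'n \<Rightarrow> complex) \<Rightarrow> bool" where
  "lie_algebra C \<longleftrightarrow>
     (\<forall>x y. lb C x y = - lb C y x) \<and>
     (\<forall>x y z. lb C x (lb C y z) + lb C y (lb C z x) + lb C z (lb C x y) = 0)"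

definition lie_ideal :: "('n::finite \<Rightarrow> 'n \<Rightarrow> 'n \<Rightarrow> complex) \<Rightarrow> (complex^'n) set \<Rightarrow> bool" where
  "lie_ideal C I \<longleftrightarrow> 0 \<in> I \<and> (\<forall>x\<in>I. \<forall>y\<in>I. x + y \<in> I) \<and> (\<forall>a. \<forall>x\<in>I. a *s x \<in> I)
     \<and> (\<forall>x\<in>I. \<forall>y. lb C x y \<in> I)"

definition simple_lie_algebra :: "('n::finite \<Rightarrow> 'n \<Rightarrow> 'n \<Rightarrow> complex) \<Rightarrow> bool" where
  "simple_lie_algebra C \<longleftrightarrow> lie_algebra C \<and> (\<exists>x y. lb C x y \<noteq> 0) \<and>
     (\<forall>I. lie_ideal C I \<longrightarrow> I = {0} \<or> I = UNIV)"

text \<open>Killing form: trace(ad x o ad y), with ad(e_i) e_a = sum_b C i a b e_b.\<close>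
definition killing :: "('n::finite \<Rightarrow> 'n \<Rightarrow> 'n \<Rightarrow> complex) \<Rightarrow> complex^'n \<Rightarrow> complex^'n \<Rightarrow> complex" where
  "killing C x y = (\<Sum>i\<in>UNIV. \<Sum>j\<in>UNIV. x$i * y$j * (\<Sum>a\<in>UNIV. \<Sum>b\<in>UNIV. C i a b * C j b a))"

definition kap :: "('n::finite \<Rightarrow> 'n \<Rightarrow> 'n \<Rightarrow> complex) \<Rightarrow> complex^'n \<Rightarrow> complex^'n \<Rightarrow> complex" where
  "kap C x y = - killing C x y"

text \<open>Antilinear involutive Lie algebra automorphism (defining the real form).\<close>
definition antilinear_involution :: "('n::finite \<Rightarrow> 'n \<Rightarrow> 'n \<Rightarrow> complex) \<Rightarrow> (complex^'n \<Rightarrow> complex^'n) \<Rightarrow> bool" where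
  "antilinear_involution C \<tau> \<longleftrightarrow>
     (\<forall>x y. \<tau> (x + y) = \<tau> x + \<tau> y) \<and> (\<forall>a x. \<tau> (a *s x) = cnj a *s \<tau> x) \<and>
     (\<forall>x. \<tau> (\<tau> x) = x) \<and> (\<forall>x y. \<tau> (lb C x y) = lb C (\<tau> x) (\<tau> y))"

text \<open>D = R (circ = False) or the circle R/LZ (circ = True), the latter represented by
  L-periodic functions integrated over one period [0,L].\<close>
definition dom :: "bool \<Rightarrow> real \<Rightarrow> real set" where
  "dom circ L = (if circ then {0..L} else UNIV)"

definition smooth_fun :: "(real \<Rightarrow> 'v::real_normed_vector) \<Rightarrow> bool" where
  "smooth_fun f \<longleftrightarrow> (\<exists>F. F 0 = f \<and> (\<forall>k x. (F k has_vector_derivative F (Suc k) x) (at x)))"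

definition test_fun :: "bool \<Rightarrow> real \<Rightarrow> (real \<Rightarrow> 'v::real_normed_vector) \<Rightarrow> bool" where
  "test_fun circ L f \<longleftrightarrow> smooth_fun f \<and>
     (if circ then (\<forall>x. f (x + L) = f x) else bounded {x. f x \<noteq> 0})"

definition smear :: "bool \<Rightarrow> real \<Rightarrow> ('c \<Rightarrow> real \<Rightarrow> complex) \<Rightarrow> (real \<Rightarrow> complex) \<Rightarrow> 'c \<Rightarrow> complex" where
  "smear circ L \<phi> f = (\<lambda>c. integral (dom circ L) (\<lambda>x. f x * \<phi> c x))"

definition gsmear :: "('n::finite \<Rightarrow> 'n \<Rightarrow> 'n \<Rightarrow> complex) \<Rightarrow> bool \<Rightarrow> real \<Rightarrow>
    ('c \<Rightarrow> real \<Rightarrow> complex^'n) \<Rightarrow> (real \<Rightarrow> complex^'n) \<Rightarrow> 'c \<Rightarrow> complex" where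
  "gsmear C circ L J f = (\<lambda>c. integral (dom circ L) (\<lambda>x. kap C (f x) (J c x)))"

definition poisson_algebra :: "('c \<Rightarrow> complex) set \<Rightarrow>
    (('c \<Rightarrow> complex) \<Rightarrow> ('c \<Rightarrow> complex) \<Rightarrow> ('c \<Rightarrow> complex)) \<Rightarrow> bool" where
  "poisson_algebra A pb \<longleftrightarrow>
     (\<forall>k. (\<lambda>_. k) \<in> A) \<and>
     (\<forall>a\<in>A. \<forall>b\<in>A. (\<lambda>c. a c + b c) \<in> A \<and> (\<lambda>c. a c * b c) \<in> A \<and> pb a b \<in> A) \<and>
     (\<forall>k. \<forall>a\<in>A. (\<lambda>c. k * a c) \<in> A) \<and>
     (\<forall>a\<in>A. \<forall>b\<in>A. pb a b = (\<lambda>c. - pb b a c)) \<and>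
     (\<forall>a\<in>A. \<forall>b\<in>A. \<forall>d\<in>A. pb a (\<lambda>c. b c + d c) = (\<lambda>c. pb a b c + pb a d c)) \<and>
     (\<forall>k. \<forall>a\<in>A. \<forall>b\<in>A. pb a (\<lambda>c. k * b c) = (\<lambda>c. k * pb a b c)) \<and>
     (\<forall>a\<in>A. \<forall>b\<in>A. \<forall>d\<in>A. pb a (\<lambda>c. b c * d c) = (\<lambda>c. pb a b c * d c + b c * pb a d c)) \<and>
     (\<forall>a\<in>A. \<forall>b\<in>A. \<forall>d\<in>A.
        (\<lambda>c. pb a (pb b d) c + pb b (pb d a) c + pb d (pb a b) c) = (\<lambda>_. 0))"

definition twist :: "'s set \<Rightarrow> ('s \<Rightarrow> nat) \<Rightarrow> ('s \<Rightarrow> nat \<Rightarrow> complex) \<Rightarrow> ('s \<Rightarrow> complex) \<Rightarrow> real \<Rightarrow> complex \<Rightarrow> complex" where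
  "twist S m lev z linf w =
     (\<Sum>\<alpha>\<in>S. \<Sum>p<m \<alpha>. lev \<alpha> p / (w - z \<alpha>) ^ (p + 1)) - complex_of_real linf"

definition gaudin_lax :: "'s set \<Rightarrow> ('s \<Rightarrow> nat) \<Rightarrow> ('s \<Rightarrow> complex) \<Rightarrow>
    ('s \<Rightarrow> nat \<Rightarrow> 'c \<Rightarrow> real \<Rightarrow> complex^'n) \<Rightarrow> complex \<Rightarrow> 'c \<Rightarrow> real \<Rightarrow> complex^'n" where
  "gaudin_lax S m z J w c x = (\<Sum>\<alpha>\<in>S. \<Sum>p<m \<alpha>. (1 / (w - z \<alpha>) ^ (p + 1)) *s J \<alpha> p c x)"

definition Dzero :: "('n::finite \<Rightarrow> 'n \<Rightarrow> 'n \<Rightarrow> complex) \<Rightarrow> bool \<Rightarrow> real \<Rightarrow> ('s \<Rightarrow> nat) \<Rightarrow>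
    ('s \<Rightarrow> nat \<Rightarrow> complex) \<Rightarrow> ('s \<Rightarrow> nat \<Rightarrow> 'c \<Rightarrow> real \<Rightarrow> complex^'n) \<Rightarrow> 's \<Rightarrow> 'c \<Rightarrow> complex" where
  "Dzero C circ L m eta J \<alpha> = (\<lambda>c. (1/2) * (\<Sum>q<m \<alpha>. \<Sum>r<m \<alpha>.
      eta \<alpha> (q + r) * integral (dom circ L) (\<lambda>x. kap C (J \<alpha> q c x) (J \<alpha> r c x))))"

definition Qcharge :: "('n::finite \<Rightarrow> 'n \<Rightarrow> 'n \<Rightarrow> complex) \<Rightarrow> bool \<Rightarrow> real \<Rightarrow> 's set \<Rightarrow> ('s \<Rightarrow> nat) \<Rightarrow>
    ('s \<Rightarrow> nat \<Rightarrow> complex) \<Rightarrow> ('s \<Rightarrow> complex) \<Rightarrow> real \<Rightarrow>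
    ('s \<Rightarrow> nat \<Rightarrow> 'c \<Rightarrow> real \<Rightarrow> complex^'n) \<Rightarrow> complex \<Rightarrow> 'c \<Rightarrow> complex" where
  "Qcharge C circ L S m lev z linf J \<zeta> = (\<lambda>c.
     - (1 / (2 * deriv (twist S m lev z linf) \<zeta>)) *
       integral (dom circ L) (\<lambda>x. kap C (gaudin_lax S m z J \<zeta> c x) (gaudin_lax S m z J \<zeta> c x)))"

end

theory Submission
  imports Defs "HOL-Computational_Algebra.Polynomial"
begin


lemma mprod_poly:
  fixes f :: "'a \<Rightarrow> complex" and k :: "'a \<Rightarrow> nat"
  shows "poly (\<Prod>a\<in>A. [:-f a, 1:]^(k a)) x = (\<Prod>a\<in>A. (x - f a)^(k a))"
  by (simp add: poly_prod)

lemma mprod_degree: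
  fixes f :: "'a \<Rightarrow> complex" and k :: "'a \<Rightarrow> nat"
  shows "degree (\<Prod>a\<in>A. [:-f a, 1:]^(k a)) = (\<Sum>a\<in>A. k a)"
  by (subst degree_prod_eq_sum_degree) (auto simp: degree_linear_power)

lemma mprod_lead:
  fixes f :: "'a \<Rightarrow> complex" and k :: "'a \<Rightarrow> nat"
  shows "lead_coeff (\<Prod>a\<in>A. [:-f a, 1:]^(k a)) = 1"
  by (simp add: lead_coeff_prod lead_coeff_power)

lemma lagrange_sum:
  fixes \<zeta> :: "nat \<Rightarrow> complex" and P :: "complex poly"
  assumes inj: "inj_on \<zeta> {..<n}" and n: "n \<ge> 1" and deg: "degree P \<le> n - 1"
  shows "(\<Sum>i<n. poly P (\<zeta> i) / (\<Prod>j\<in>{..<n}-{i}. (\<zeta> i - \<zeta> j))) = coeff P (n-1)"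
proof -
  define d where "d i = (\<Prod>j\<in>{..<n}-{i}. (\<zeta> i - \<zeta> j))" for i
  define B where "B i = (\<Prod>j\<in>{..<n}-{i}. [:-\<zeta> j, 1:]^(1::nat))" for i
  define Q where "Q = (\<Sum>i<n. smult (poly P (\<zeta> i) / d i) (B i))"
  have dnz: "d i \<noteq> 0" if "i < n" for i
    unfolding d_def using inj that by (auto simp: inj_on_def)
  have degB: "degree (B i) = n - 1" if "i < n" for i
    unfolding B_def mprod_degree using that by simp
  have polyB: "poly (B i) x = (\<Prod>j\<in>{..<n}-{i}. (x - \<zeta> j))" for i x
    unfolding B_def mprod_poly by simp
  have degQ: "degree Q \<le> n - 1"
    unfolding Q_def by (intro degree_sum_le) (auto intro: order.trans[OF degree_smult_le] simp: degB)
  have PQ: "poly P x = poly Q x" if "x \<in> \<zeta> ` {..<n}" for x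
  proof -
    from that obtain k where k: "k < n" "x = \<zeta> k" by auto
    have "poly Q x = (\<Sum>i<n. poly P (\<zeta> i) / d i * poly (B i) x)"
      unfolding Q_def by (simp add: poly_sum)
    also have "\<dots> = (\<Sum>i\<in>{k}. poly P (\<zeta> i) / d i * poly (B i) x)"
    proof (rule sum.mono_neutral_right)
      show "\<forall>i\<in>{..<n} - {k}. poly P (\<zeta> i) / d i * poly (B i) x = 0"
      proof
        fix i assume i: "i \<in> {..<n} - {k}"
        have "poly (B i) x = 0" unfolding polyB k(2)
          by (rule prod_zero) (use i k in auto)
        then show "poly P (\<zeta> i) / d i * poly (B i) x = 0" by simp
      qed
    qed (use k in auto)
    also have "\<dots> = poly P x" using k dnz[OF k(1)] by (simp add: polyB d_def)
    finally show ?thesis by simp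
  qed
  have "P = Q"
    by (rule poly_eqI_degree[OF PQ]) (use inj n deg degQ in \<open>auto simp: card_image\<close>)
  then have "coeff P (n-1) = coeff Q (n-1)" by simp
  also have "\<dots> = (\<Sum>i<n. poly P (\<zeta> i) / d i * coeff (B i) (n-1))"
    unfolding Q_def coeff_sum coeff_smult by simp
  also have "\<dots> = (\<Sum>i<n. poly P (\<zeta> i) / d i)"
  proof (rule sum.cong)
    fix i assume "i \<in> {..<n}"
    have "lead_coeff (B i) = 1" unfolding B_def by (rule mprod_lead)
    then have "coeff (B i) (n-1) = 1" using degB[OF \<open>i \<in> {..<n}\<close>[simplified]] by simp
    then show "poly P (\<zeta> i) / d i * coeff (B i) (n-1) = poly P (\<zeta> i) / d i" by simp
  qed simp
  finally show ?thesis by (simp add: d_def)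
qed

lemma prod_split_pow:
  fixes w :: complex
  assumes "finite S" "\<alpha> \<in> S" "k \<le> m \<alpha>"
  shows "(\<Prod>\<gamma>\<in>S. (w - z \<gamma>) ^ (if \<gamma> = \<alpha> then m \<gamma> - k else m \<gamma>)) * (w - z \<alpha>) ^ k
       = (\<Prod>\<gamma>\<in>S. (w - z \<gamma>) ^ m \<gamma>)"
proof -
  have "(\<Prod>\<gamma>\<in>S. (w - z \<gamma>) ^ (if \<gamma> = \<alpha> then m \<gamma> - k else m \<gamma>))
      = (w - z \<alpha>) ^ (m \<alpha> - k) * (\<Prod>\<gamma>\<in>S-{\<alpha>}. (w - z \<gamma>) ^ m \<gamma>)"
    using assms by (simp add: prod.remove)
  moreover have "(\<Prod>\<gamma>\<in>S. (w - z \<gamma>) ^ m \<gamma>) = (w - z \<alpha>) ^ m \<alpha> * (\<Prod>\<gamma>\<in>S-{\<alpha>}. (w - z \<gamma>) ^ m \<gamma>)"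
    using assms by (simp add: prod.remove)
  moreover have "(w - z \<alpha>) ^ (m \<alpha> - k) * (w - z \<alpha>) ^ k = (w - z \<alpha>) ^ m \<alpha>"
    using assms by (simp add: power_add[symmetric])
  ultimately show ?thesis by (simp add: algebra_simps)
qed

lemma twist_factor:
  fixes S :: "'s set" and m :: "'s \<Rightarrow> nat" and lev :: "'s \<Rightarrow> nat \<Rightarrow> complex"
    and z :: "'s \<Rightarrow> complex" and linf :: real and \<zeta> :: "nat \<Rightarrow> complex"
  assumes finS: "finite S"
    and zer: "\<forall>i<(\<Sum>\<alpha>\<in>S. m \<alpha>). \<zeta> i \<notin> z ` S \<and> twist S m lev z linf (\<zeta> i) = 0"
    and inj: "inj_on \<zeta> {..<(\<Sum>\<alpha>\<in>S. m \<alpha>)}"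
    and w: "w \<notin> z ` S"
  shows "twist S m lev z linf w
     = - linf * (\<Prod>j<(\<Sum>\<alpha>\<in>S. m \<alpha>). (w - \<zeta> j)) / (\<Prod>\<gamma>\<in>S. (w - z \<gamma>) ^ m \<gamma>)"
proof -
  define Mn where "Mn = (\<Sum>\<alpha>\<in>S. m \<alpha>)"
  define Dp where "Dp = (\<Prod>\<gamma>\<in>S. [:-z \<gamma>, 1:] ^ m \<gamma>)"
  define Zp where "Zp = (\<Prod>j\<in>{..<Mn}. [:-\<zeta> j, 1:] ^ (1::nat))"
  define T where "T \<alpha> p = smult (lev \<alpha> p)
      (\<Prod>\<gamma>\<in>S. [:-z \<gamma>, 1:] ^ (if \<gamma> = \<alpha> then m \<gamma> - (p+1) else m \<gamma>))" for \<alpha> p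
  define Np where "Np = smult (- complex_of_real linf) Dp + (\<Sum>\<alpha>\<in>S. \<Sum>p<m \<alpha>. T \<alpha> p)"
  define D where "D x = (\<Prod>\<gamma>\<in>S. (x - z \<gamma>) ^ m \<gamma>)" for x
  have Dnz: "D x \<noteq> 0" if "x \<notin> z ` S" for x
    unfolding D_def using finS that by (auto simp: prod_zero_iff)
  have degDp: "degree Dp = Mn" unfolding Dp_def Mn_def by (rule mprod_degree)
  have leadDp: "lead_coeff Dp = 1" unfolding Dp_def by (rule mprod_lead)
  have degZp: "degree Zp = Mn" unfolding Zp_def using mprod_degree[of \<zeta> "\<lambda>_. 1" "{..<Mn}"] by simp
  have leadZp: "lead_coeff Zp = 1" unfolding Zp_def by (rule mprod_lead)
  have degT: "degree (T \<alpha> p) < Mn" if "\<alpha> \<in> S" "p < m \<alpha>" for \<alpha> p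
  proof -
    have "degree (T \<alpha> p) \<le> (\<Sum>\<gamma>\<in>S. (if \<gamma> = \<alpha> then m \<gamma> - (p+1) else m \<gamma>))"
      unfolding T_def by (rule order.trans[OF degree_smult_le]) (simp add: mprod_degree)
    also have "\<dots> < Mn" unfolding Mn_def
      by (rule sum_strict_mono_ex1) (use finS that in auto)
    finally show ?thesis .
  qed
  have degNp: "degree Np \<le> Mn"
    unfolding Np_def
    by (intro degree_add_le order.trans[OF degree_smult_le] degree_sum_le)
       (use finS degT degDp in \<open>auto intro: less_imp_le\<close>)
  have coeffNp: "coeff Np Mn = - complex_of_real linf"
  proof -
    have "coeff (T \<alpha> p) Mn = 0" if "\<alpha> \<in> S" "p < m \<alpha>" for \<alpha> p
      using degT[OF that] by (simp add: coeff_eq_0)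
    then show ?thesis using leadDp degDp unfolding Np_def by (simp add: coeff_sum)
  qed
  have polyNp: "poly Np x = D x * twist S m lev z linf x" if "x \<notin> z ` S" for x
  proof -
    have "poly (T \<alpha> p) x = D x * (lev \<alpha> p / (x - z \<alpha>) ^ (p + 1))" if "\<alpha> \<in> S" "p < m \<alpha>" for \<alpha> p
    proof -
      have ne: "(x - z \<alpha>) ^ (p+1) \<noteq> 0" using \<open>x \<notin> z ` S\<close> that by auto
      have "D x = (\<Prod>\<gamma>\<in>S. (x - z \<gamma>) ^ (if \<gamma> = \<alpha> then m \<gamma> - (p+1) else m \<gamma>)) * (x - z \<alpha>) ^ (p+1)"
        unfolding D_def by (rule prod_split_pow[symmetric]) (use finS that in auto)
      moreover have "poly (T \<alpha> p) x = lev \<alpha> p * (\<Prod>\<gamma>\<in>S. (x - z \<gamma>) ^ (if \<gamma> = \<alpha> then m \<gamma> - (p+1) else m \<gamma>))"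
        unfolding T_def poly_smult mprod_poly by simp
      ultimately show ?thesis using ne by simp
    qed
    then show ?thesis unfolding Np_def twist_def
      by (simp add: poly_sum Dp_def poly_prod D_def sum_distrib_left algebra_simps)
  qed
  have "Np = smult (- complex_of_real linf) Zp"
  proof (rule poly_eqI_degree_lead_coeff[where n = Mn and A = "\<zeta> ` {..<Mn}"])
    show "coeff Np Mn = coeff (smult (- complex_of_real linf) Zp) Mn"
      using coeffNp leadZp degZp by simp
    show "Mn \<le> card (\<zeta> ` {..<Mn})" using inj by (simp add: card_image Mn_def)
    show "degree Np \<le> Mn" by (rule degNp)
    show "degree (smult (- complex_of_real linf) Zp) \<le> Mn" using degZp by (simp add: degree_smult_le)
  next
    fix x assume "x \<in> \<zeta> ` {..<Mn}"
    then obtain k where k: "k < Mn" "x = \<zeta> k" by auto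
    have "poly Zp x = 0" unfolding Zp_def poly_prod using k by (auto intro: prod_zero)
    moreover have "poly Np x = 0" using polyNp[of x] zer k unfolding Mn_def by auto
    ultimately show "poly Np x = poly (smult (- complex_of_real linf) Zp) x" by simp
  qed
  then have "D w * twist S m lev z linf w = - linf * (\<Prod>j<Mn. (w - \<zeta> j))"
    using polyNp[OF w] by (simp add: Zp_def poly_prod)
  then show ?thesis using Dnz[OF w] unfolding D_def Mn_def by (simp add: field_simps)
qed

lemma twist_deriv:
  fixes S :: "'s set" and m :: "'s \<Rightarrow> nat" and lev :: "'s \<Rightarrow> nat \<Rightarrow> complex"
    and z :: "'s \<Rightarrow> complex" and linf :: real and \<zeta> :: "nat \<Rightarrow> complex"
  assumes finS: "finite S"
    and zer: "\<forall>i<(\<Sum>\<alpha>\<in>S. m \<alpha>). \<zeta> i \<notin> z ` S \<and> twist S m lev z linf (\<zeta> i) = 0"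
    and inj: "inj_on \<zeta> {..<(\<Sum>\<alpha>\<in>S. m \<alpha>)}"
    and i: "i < (\<Sum>\<alpha>\<in>S. m \<alpha>)"
  shows "deriv (twist S m lev z linf) (\<zeta> i)
     = - linf * (\<Prod>j\<in>{..<(\<Sum>\<alpha>\<in>S. m \<alpha>)}-{i}. (\<zeta> i - \<zeta> j)) / (\<Prod>\<gamma>\<in>S. (\<zeta> i - z \<gamma>) ^ m \<gamma>)"
proof -
  define Mn where "Mn = (\<Sum>\<alpha>\<in>S. m \<alpha>)"
  define U where "U = - (z ` S)"
  define g where "g w = - linf * (\<Prod>j\<in>{..<Mn}-{i}. (w - \<zeta> j)) / (\<Prod>\<gamma>\<in>S. (w - z \<gamma>) ^ m \<gamma>)" for w
  have oU: "open U" unfolding U_def using finS by (auto intro: finite_imp_closed)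
  have zU: "\<zeta> i \<in> U" using zer i unfolding U_def by auto
  have "g holomorphic_on U"
    unfolding g_def U_def
    by (intro holomorphic_intros) (use finS in \<open>auto simp: prod_zero_iff\<close>)
  then have "g field_differentiable (at (\<zeta> i))" using oU zU by (rule holomorphic_on_imp_differentiable_at)
  then obtain g' where g': "(g has_field_derivative g') (at (\<zeta> i))" unfolding field_differentiable_def by blast
  have h1: "((\<lambda>w. w - \<zeta> i) has_field_derivative 1) (at (\<zeta> i))" by (auto intro!: derivative_eq_intros)
  have d: "((\<lambda>w. (w - \<zeta> i) * g w) has_field_derivative g (\<zeta> i)) (at (\<zeta> i))"
    using DERIV_mult[OF h1 g'] by simp
  have "(twist S m lev z linf has_field_derivative g (\<zeta> i)) (at (\<zeta> i))"
  proof (rule has_field_derivative_transform_within_open[OF d oU zU])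
    fix w assume "w \<in> U"
    then have w: "w \<notin> z ` S" unfolding U_def by auto
    have "(\<Prod>j<Mn. (w - \<zeta> j)) = (w - \<zeta> i) * (\<Prod>j\<in>{..<Mn}-{i}. (w - \<zeta> j))"
      using i unfolding Mn_def by (simp add: prod.remove)
    then show "(w - \<zeta> i) * g w = twist S m lev z linf w"
      unfolding twist_factor[OF finS zer inj w] g_def Mn_def by simp
  qed
  then show ?thesis unfolding g_def Mn_def by (rule DERIV_imp_deriv)
qed

lemma factG:
  fixes S :: "'s set" and m :: "'s \<Rightarrow> nat" and lev :: "'s \<Rightarrow> nat \<Rightarrow> complex"
    and z :: "'s \<Rightarrow> complex" and linf :: real and \<zeta> :: "nat \<Rightarrow> complex" and e :: "'s \<Rightarrow> nat"
  assumes finS: "finite S"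
    and zer: "\<forall>i<(\<Sum>\<alpha>\<in>S. m \<alpha>). \<zeta> i \<notin> z ` S \<and> twist S m lev z linf (\<zeta> i) = 0"
    and inj: "inj_on \<zeta> {..<(\<Sum>\<alpha>\<in>S. m \<alpha>)}"
    and linf_nz: "linf \<noteq> 0"
    and e_le: "\<forall>\<gamma>\<in>S. e \<gamma> \<le> m \<gamma>"
    and e_pos: "1 \<le> (\<Sum>\<gamma>\<in>S. e \<gamma>)"
  shows "(\<Sum>i<(\<Sum>\<alpha>\<in>S. m \<alpha>). (1 / deriv (twist S m lev z linf) (\<zeta> i)) / (\<Prod>\<gamma>\<in>S. (\<zeta> i - z \<gamma>) ^ e \<gamma>))
     = (if (\<Sum>\<gamma>\<in>S. e \<gamma>) = 1 then - 1 / linf else 0)"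
proof -
  define Mn where "Mn = (\<Sum>\<alpha>\<in>S. m \<alpha>)"
  define Pe where "Pe = (\<Prod>\<gamma>\<in>S. [:-z \<gamma>, 1:] ^ (m \<gamma> - e \<gamma>))"
  define d where "d i = (\<Prod>j\<in>{..<Mn}-{i}. (\<zeta> i - \<zeta> j))" for i
  define D where "D x = (\<Prod>\<gamma>\<in>S. (x - z \<gamma>) ^ m \<gamma>)" for x
  have sle: "(\<Sum>\<gamma>\<in>S. e \<gamma>) \<le> Mn" unfolding Mn_def using e_le by (intro sum_mono) auto
  have Mn1: "Mn \<ge> 1" using sle e_pos by simp
  have degPe: "degree Pe = Mn - (\<Sum>\<gamma>\<in>S. e \<gamma>)"
    unfolding Pe_def mprod_degree Mn_def by (rule sum_subtractf_nat) (use e_le in auto)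
  have leadPe: "lead_coeff Pe = 1" unfolding Pe_def by (rule mprod_lead)
  have coeffPe: "coeff Pe (Mn - 1) = (if (\<Sum>\<gamma>\<in>S. e \<gamma>) = 1 then 1 else 0)"
  proof (cases "(\<Sum>\<gamma>\<in>S. e \<gamma>) = 1")
    case True then show ?thesis using degPe leadPe by simp
  next
    case False then have "degree Pe < Mn - 1" using degPe e_pos sle by linarith
    then show ?thesis using False by (simp add: coeff_eq_0)
  qed
  have tm: "(1 / deriv (twist S m lev z linf) (\<zeta> i)) / (\<Prod>\<gamma>\<in>S. (\<zeta> i - z \<gamma>) ^ e \<gamma>)
      = - (1 / linf) * (poly Pe (\<zeta> i) / d i)" if i: "i < Mn" for i
  proof -
    have zi: "\<zeta> i \<notin> z ` S" using zer i unfolding Mn_def by auto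
    have dnz: "d i \<noteq> 0" unfolding d_def using inj i by (auto simp: inj_on_def Mn_def)
    have Enz: "(\<Prod>\<gamma>\<in>S. (\<zeta> i - z \<gamma>) ^ e \<gamma>) \<noteq> 0" using zi finS by (auto simp: prod_zero_iff)
    have Dsplit: "D (\<zeta> i) = poly Pe (\<zeta> i) * (\<Prod>\<gamma>\<in>S. (\<zeta> i - z \<gamma>) ^ e \<gamma>)"
    proof -
      have "poly Pe (\<zeta> i) * (\<Prod>\<gamma>\<in>S. (\<zeta> i - z \<gamma>) ^ e \<gamma>)
          = (\<Prod>\<gamma>\<in>S. (\<zeta> i - z \<gamma>) ^ (m \<gamma> - e \<gamma>) * (\<zeta> i - z \<gamma>) ^ e \<gamma>)"
        unfolding Pe_def mprod_poly by (simp add: prod.distrib)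
      also have "\<dots> = D (\<zeta> i)" unfolding D_def
        by (rule prod.cong) (use e_le in \<open>auto simp: power_add[symmetric]\<close>)
      finally show ?thesis by simp
    qed
    have "deriv (twist S m lev z linf) (\<zeta> i) = - linf * d i / D (\<zeta> i)"
      using twist_deriv[OF finS zer inj, of i] i unfolding d_def D_def Mn_def by simp
    then show ?thesis using dnz Enz linf_nz Dsplit by (simp add: field_simps)
  qed
  have "(\<Sum>i<Mn. (1 / deriv (twist S m lev z linf) (\<zeta> i)) / (\<Prod>\<gamma>\<in>S. (\<zeta> i - z \<gamma>) ^ e \<gamma>))
      = (\<Sum>i<Mn. - (1 / linf) * (poly Pe (\<zeta> i) / d i))" by (rule sum.cong) (simp_all only: tm lessThan_iff)
  also have "\<dots> = - (1 / linf) * coeff Pe (Mn - 1)"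
    unfolding sum_distrib_left[symmetric] d_def
    by (subst lagrange_sum) (use inj Mn1 degPe e_pos in \<open>auto simp: Mn_def\<close>)
  finally show ?thesis unfolding Mn_def[symmetric] coeffPe by simp
qed

lemma prod_if1:
  fixes f :: "'s \<Rightarrow> complex"
  assumes "finite S" "\<alpha> \<in> S"
  shows "(\<Prod>\<gamma>\<in>S. f \<gamma> ^ (if \<gamma> = \<alpha> then k else 0)) = f \<alpha> ^ k"
proof -
  have "(\<Prod>\<gamma>\<in>S. f \<gamma> ^ (if \<gamma> = \<alpha> then k else 0)) = f \<alpha> ^ k * (\<Prod>\<gamma>\<in>S-{\<alpha>}. f \<gamma> ^ (if \<gamma> = \<alpha> then k else 0))"
    using assms by (simp add: prod.remove)
  also have "(\<Prod>\<gamma>\<in>S-{\<alpha>}. f \<gamma> ^ (if \<gamma> = \<alpha> then k else 0)) = 1"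
    by (rule prod.neutral) auto
  finally show ?thesis by simp
qed

lemma prod_if2:
  fixes f :: "'s \<Rightarrow> complex"
  assumes "finite S" "\<alpha> \<in> S" "\<beta> \<in> S" "\<alpha> \<noteq> \<beta>"
  shows "(\<Prod>\<gamma>\<in>S. f \<gamma> ^ (if \<gamma> = \<alpha> then a else if \<gamma> = \<beta> then b else 0)) = f \<alpha> ^ a * f \<beta> ^ b"
proof -
  have "(\<Prod>\<gamma>\<in>S. f \<gamma> ^ (if \<gamma> = \<alpha> then a else if \<gamma> = \<beta> then b else 0))
     = f \<alpha> ^ a * (\<Prod>\<gamma>\<in>S-{\<alpha>}. f \<gamma> ^ (if \<gamma> = \<alpha> then a else if \<gamma> = \<beta> then b else 0))"
    using assms by (simp add: prod.remove)
  also have "(\<Prod>\<gamma>\<in>S-{\<alpha>}. f \<gamma> ^ (if \<gamma> = \<alpha> then a else if \<gamma> = \<beta> then b else 0))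
     = f \<beta> ^ b * (\<Prod>\<gamma>\<in>S-{\<alpha>}-{\<beta>}. f \<gamma> ^ (if \<gamma> = \<alpha> then a else if \<gamma> = \<beta> then b else 0))"
    using assms by (subst prod.remove[of _ \<beta>]) auto
  also have "(\<Prod>\<gamma>\<in>S-{\<alpha>}-{\<beta>}. f \<gamma> ^ (if \<gamma> = \<alpha> then a else if \<gamma> = \<beta> then b else 0)) = 1"
    by (rule prod.neutral) auto
  finally show ?thesis by simp
qed

lemma sum_if1:
  assumes "finite S" "\<alpha> \<in> S"
  shows "(\<Sum>\<gamma>\<in>S. (if \<gamma> = \<alpha> then k else 0::nat)) = k"
  using assms by simp

lemma sum_if2:
  assumes "finite S" "\<alpha> \<in> S" "\<beta> \<in> S" "\<alpha> \<noteq> \<beta>"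
  shows "(\<Sum>\<gamma>\<in>S. (if \<gamma> = \<alpha> then a else if \<gamma> = \<beta> then b else 0::nat)) = a + b"
proof -
  have "(\<Sum>\<gamma>\<in>S. (if \<gamma> = \<alpha> then a else if \<gamma> = \<beta> then b else 0::nat))
      = (\<Sum>\<gamma>\<in>S. (if \<gamma> = \<alpha> then a else 0) + (if \<gamma> = \<beta> then b else 0))"
    by (rule sum.cong) (use assms in auto)
  also have "\<dots> = a + b" using assms by (simp add: sum.distrib)
  finally show ?thesis .
qed

lemma sig_single:
  fixes S :: "'s set" and m :: "'s \<Rightarrow> nat" and lev :: "'s \<Rightarrow> nat \<Rightarrow> complex"
    and z :: "'s \<Rightarrow> complex" and linf :: real and \<zeta> :: "nat \<Rightarrow> complex"
  assumes finS: "finite S"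
    and zer: "\<forall>i<(\<Sum>\<alpha>\<in>S. m \<alpha>). \<zeta> i \<notin> z ` S \<and> twist S m lev z linf (\<zeta> i) = 0"
    and inj: "inj_on \<zeta> {..<(\<Sum>\<alpha>\<in>S. m \<alpha>)}"
    and linf_nz: "linf \<noteq> 0"
    and \<alpha>: "\<alpha> \<in> S" and k: "1 \<le> k" "k \<le> m \<alpha>"
  shows "(\<Sum>i<(\<Sum>\<alpha>\<in>S. m \<alpha>). (1 / deriv (twist S m lev z linf) (\<zeta> i)) / (\<zeta> i - z \<alpha>) ^ k)
     = (if k = 1 then - 1 / linf else 0)"
  using factG[OF finS zer inj linf_nz, of "\<lambda>\<gamma>. if \<gamma> = \<alpha> then k else 0"] \<alpha> k finS
  by (simp add: prod_if1[OF finS \<alpha>, of "\<lambda>\<gamma>. _ - z \<gamma>"] sum_if1[OF finS \<alpha>])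

lemma sig_pair:
  fixes S :: "'s set" and m :: "'s \<Rightarrow> nat" and lev :: "'s \<Rightarrow> nat \<Rightarrow> complex"
    and z :: "'s \<Rightarrow> complex" and linf :: real and \<zeta> :: "nat \<Rightarrow> complex"
  assumes finS: "finite S"
    and zer: "\<forall>i<(\<Sum>\<alpha>\<in>S. m \<alpha>). \<zeta> i \<notin> z ` S \<and> twist S m lev z linf (\<zeta> i) = 0"
    and inj: "inj_on \<zeta> {..<(\<Sum>\<alpha>\<in>S. m \<alpha>)}"
    and linf_nz: "linf \<noteq> 0"
    and \<alpha>: "\<alpha> \<in> S" and \<beta>: "\<beta> \<in> S" and ne: "\<alpha> \<noteq> \<beta>"
    and a: "1 \<le> a" "a \<le> m \<alpha>" and b: "1 \<le> b" "b \<le> m \<beta>"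
  shows "(\<Sum>i<(\<Sum>\<alpha>\<in>S. m \<alpha>). (1 / deriv (twist S m lev z linf) (\<zeta> i)) / ((\<zeta> i - z \<alpha>) ^ a * (\<zeta> i - z \<beta>) ^ b)) = 0"
  using factG[OF finS zer inj linf_nz, of "\<lambda>\<gamma>. if \<gamma> = \<alpha> then a else if \<gamma> = \<beta> then b else 0"] \<alpha> \<beta> ne a b finS
  by (simp add: prod_if2[OF finS \<alpha> \<beta> ne, of "\<lambda>\<gamma>. _ - z \<gamma>"] sum_if2[OF finS \<alpha> \<beta> ne])



lemma sig_rel:
  fixes S :: "'s set" and m :: "'s \<Rightarrow> nat" and lev :: "'s \<Rightarrow> nat \<Rightarrow> complex"
    and z :: "'s \<Rightarrow> complex" and linf :: real and \<zeta> :: "nat \<Rightarrow> complex"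
  assumes finS: "finite S"
    and zer: "\<forall>i<(\<Sum>\<alpha>\<in>S. m \<alpha>). \<zeta> i \<notin> z ` S \<and> twist S m lev z linf (\<zeta> i) = 0"
    and inj: "inj_on \<zeta> {..<(\<Sum>\<alpha>\<in>S. m \<alpha>)}"
    and linf_nz: "linf \<noteq> 0"
    and \<alpha>: "\<alpha> \<in> S" and k: "1 \<le> k" "k \<le> m \<alpha>"
  shows "(\<Sum>q<m \<alpha>. lev \<alpha> q * (\<Sum>i<(\<Sum>\<alpha>\<in>S. m \<alpha>). (1 / deriv (twist S m lev z linf) (\<zeta> i)) / (\<zeta> i - z \<alpha>) ^ (k + q + 1)))
     = (if k = 1 then - 1 else 0)"
proof -
  define Mn where "Mn = (\<Sum>\<alpha>\<in>S. m \<alpha>)"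
  define c where "c i = 1 / deriv (twist S m lev z linf) (\<zeta> i)" for i
  define A where "A i = c i / (\<zeta> i - z \<alpha>) ^ k" for i
  define B where "B i \<gamma> q = lev \<gamma> q / (\<zeta> i - z \<gamma>) ^ (q + 1)" for i \<gamma> q
  have zi: "\<zeta> i \<notin> z ` S" if "i < Mn" for i using zer that unfolding Mn_def by auto
  have "0 = (\<Sum>i<Mn. A i * twist S m lev z linf (\<zeta> i))"
    using zer unfolding Mn_def by simp
  also have "\<dots> = (\<Sum>i<Mn. (\<Sum>\<gamma>\<in>S. \<Sum>q<m \<gamma>. A i * B i \<gamma> q) - linf * A i)"
    by (rule sum.cong) (simp_all add: twist_def B_def right_diff_distrib sum_distrib_left mult.commute)
  also have "\<dots> = (\<Sum>i<Mn. \<Sum>\<gamma>\<in>S. \<Sum>q<m \<gamma>. A i * B i \<gamma> q) - linf * (\<Sum>i<Mn. A i)"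
    by (simp only: sum_subtractf sum_distrib_left)
  also have "(\<Sum>i<Mn. \<Sum>\<gamma>\<in>S. \<Sum>q<m \<gamma>. A i * B i \<gamma> q) = (\<Sum>\<gamma>\<in>S. \<Sum>i<Mn. \<Sum>q<m \<gamma>. A i * B i \<gamma> q)"
    by (rule sum.swap)
  also have "\<dots> = (\<Sum>\<gamma>\<in>S. \<Sum>q<m \<gamma>. \<Sum>i<Mn. A i * B i \<gamma> q)"
    by (rule sum.cong[OF refl], rule sum.swap)
  finally have eq0: "(\<Sum>\<gamma>\<in>S. \<Sum>q<m \<gamma>. \<Sum>i<Mn. A i * B i \<gamma> q) = linf * (\<Sum>i<Mn. A i)" by simp
  have sA: "(\<Sum>i<Mn. A i) = (if k = 1 then - 1 / linf else 0)"
    unfolding A_def c_def Mn_def by (rule sig_single[OF finS zer inj linf_nz \<alpha> k])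
  have other: "(\<Sum>q<m \<gamma>. \<Sum>i<Mn. A i * B i \<gamma> q) = 0" if "\<gamma> \<in> S" "\<gamma> \<noteq> \<alpha>" for \<gamma>
  proof (rule sum.neutral, rule ballI)
    fix q assume q: "q \<in> {..<m \<gamma>}"
    have "(\<Sum>i<Mn. A i * B i \<gamma> q) = lev \<gamma> q * (\<Sum>i<Mn. c i / ((\<zeta> i - z \<alpha>) ^ k * (\<zeta> i - z \<gamma>) ^ (q+1)))"
      unfolding sum_distrib_left A_def B_def by (rule sum.cong) (auto simp: field_simps)
    also have "(\<Sum>i<Mn. c i / ((\<zeta> i - z \<alpha>) ^ k * (\<zeta> i - z \<gamma>) ^ (q+1))) = 0"
      unfolding c_def Mn_def by (rule sig_pair[OF finS zer inj linf_nz \<alpha> that(1) that(2)[symmetric] k]) (use q in auto)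
    finally show "(\<Sum>i<Mn. A i * B i \<gamma> q) = 0" by simp
  qed
  have self: "(\<Sum>i<Mn. A i * B i \<alpha> q) = lev \<alpha> q * (\<Sum>i<Mn. c i / (\<zeta> i - z \<alpha>) ^ (k + q + 1))" for q
    unfolding sum_distrib_left A_def B_def by (rule sum.cong) (auto simp: field_simps power_add)
  have "(\<Sum>\<gamma>\<in>S. \<Sum>q<m \<gamma>. \<Sum>i<Mn. A i * B i \<gamma> q) = (\<Sum>q<m \<alpha>. \<Sum>i<Mn. A i * B i \<alpha> q)"
    using finS \<alpha> other by (simp add: sum.remove)
  then have "(\<Sum>q<m \<alpha>. lev \<alpha> q * (\<Sum>i<Mn. c i / (\<zeta> i - z \<alpha>) ^ (k + q + 1))) = linf * (\<Sum>i<Mn. A i)"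
    using eq0 self by simp
  then show ?thesis using sA linf_nz unfolding c_def Mn_def by simp
qed

lemma hankel_unique:
  fixes x y l :: "nat \<Rightarrow> complex" and m :: nat
  assumes l: "l (m - 1) \<noteq> 0" and m: "m \<ge> 1"
    and x0: "\<forall>n<m-1. x n = 0" and y0: "\<forall>n<m-1. y n = 0"
    and xr: "\<forall>s<m. (\<Sum>p<m. x (p + s) * l p) = (if s = 0 then 1 else 0)"
    and yr: "\<forall>s<m. (\<Sum>p<m. y (p + s) * l p) = (if s = 0 then 1 else 0)"
  shows "n \<le> 2 * m - 2 \<Longrightarrow> x n = y n"
proof (induction n rule: less_induct)
  case (less n)
  show ?case
  proof (cases "n < m - 1")
    case True then show ?thesis using x0 y0 by simp
  next
    case False
    define s where "s = n - (m - 1)"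
    have s: "s < m" using less.prems False m unfolding s_def by linarith
    have ns: "n = (m - 1) + s" using False unfolding s_def by simp
    have split: "(\<Sum>p<m. f (p + s) * l p) = f n * l (m - 1) + (\<Sum>p<m-1. f (p + s) * l p)" for f :: "nat \<Rightarrow> complex"
    proof -
      have "{..<m} = insert (m - 1) {..<m-1}" using m by auto
      then show ?thesis using ns by (simp add: add.commute)
    qed
    have low: "(\<Sum>p<m-1. x (p + s) * l p) = (\<Sum>p<m-1. y (p + s) * l p)"
      by (rule sum.cong) (use less.IH less.prems ns in auto)
    have e1: "x n * l (m - 1) + (\<Sum>p<m-1. y (p + s) * l p) = (if s = 0 then 1 else 0)"
      using xr[rule_format, OF s] split[of x] low by simp
    have e2: "y n * l (m - 1) + (\<Sum>p<m-1. y (p + s) * l p) = (if s = 0 then 1 else 0)"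
      using yr[rule_format, OF s] split[of y] by simp
    have "x n * l (m - 1) = y n * l (m - 1)"
    proof -
      have "x n * l (m - 1) + (\<Sum>p<m-1. y (p + s) * l p) = y n * l (m - 1) + (\<Sum>p<m-1. y (p + s) * l p)"
        using e1 e2 by simp
      then show ?thesis by simp
    qed
    then show ?thesis using l by simp
  qed
qed

lemma eta_eq:
  fixes S :: "'s set" and m :: "'s \<Rightarrow> nat" and lev :: "'s \<Rightarrow> nat \<Rightarrow> complex"
    and z :: "'s \<Rightarrow> complex" and linf :: real and \<zeta> :: "nat \<Rightarrow> complex"
    and eta :: "'s \<Rightarrow> nat \<Rightarrow> complex"
  assumes finS: "finite S"
    and zer: "\<forall>i<(\<Sum>\<alpha>\<in>S. m \<alpha>). \<zeta> i \<notin> z ` S \<and> twist S m lev z linf (\<zeta> i) = 0"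
    and inj: "inj_on \<zeta> {..<(\<Sum>\<alpha>\<in>S. m \<alpha>)}"
    and linf_nz: "linf \<noteq> 0"
    and \<alpha>: "\<alpha> \<in> S" and mpos: "m \<alpha> \<ge> 1" and ltop: "lev \<alpha> (m \<alpha> - 1) \<noteq> 0"
    and eta_def: "\<forall>q<m \<alpha>. \<forall>r<m \<alpha>.
        (\<Sum>p\<le>m \<alpha> - 1 - r. eta \<alpha> (p + q) * lev \<alpha> (p + r)) = (if q = r then 1 else 0)"
    and n: "n \<le> 2 * m \<alpha> - 2"
  shows "eta \<alpha> n = - (\<Sum>i<(\<Sum>\<alpha>\<in>S. m \<alpha>). (1 / deriv (twist S m lev z linf) (\<zeta> i)) / (\<zeta> i - z \<alpha>) ^ (n + 2))"
proof -
  define \<sigma> where "\<sigma> j = (\<Sum>i<(\<Sum>\<alpha>\<in>S. m \<alpha>). (1 / deriv (twist S m lev z linf) (\<zeta> i)) / (\<zeta> i - z \<alpha>) ^ j)" for j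
  have atm: "{..m \<alpha> - 1} = {..<m \<alpha>}" using mpos by auto
  have "eta \<alpha> n = (\<lambda>n. - \<sigma> (n + 2)) n"
  proof (rule hankel_unique[where l = "lev \<alpha>" and m = "m \<alpha>", OF ltop mpos _ _ _ _ n])
    show "\<forall>n<m \<alpha> - 1. eta \<alpha> n = 0"
    proof (intro allI impI)
      fix n assume nl: "n < m \<alpha> - 1"
      have "(\<Sum>p\<le>m \<alpha> - 1 - (m \<alpha> - 1). eta \<alpha> (p + n) * lev \<alpha> (p + (m \<alpha> - 1))) = 0"
        using eta_def[rule_format, of n "m \<alpha> - 1"] nl mpos by simp
      then show "eta \<alpha> n = 0" using ltop by simp
    qed
    show "\<forall>n<m \<alpha> - 1. - \<sigma> (n + 2) = 0"
    proof (intro allI impI)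
      fix n assume nl: "n < m \<alpha> - 1"
      show "- \<sigma> (n + 2) = 0" unfolding \<sigma>_def
        using sig_single[OF finS zer inj linf_nz \<alpha>, of "n + 2"] nl by simp
    qed
    show "\<forall>s<m \<alpha>. (\<Sum>p<m \<alpha>. eta \<alpha> (p + s) * lev \<alpha> p) = (if s = 0 then 1 else 0)"
    proof (intro allI impI)
      fix s assume sl: "s < m \<alpha>"
      show "(\<Sum>p<m \<alpha>. eta \<alpha> (p + s) * lev \<alpha> p) = (if s = 0 then 1 else 0)"
        using eta_def[rule_format, of s 0] sl mpos by (simp only: atm diff_zero add_0_right)
    qed
    show "\<forall>s<m \<alpha>. (\<Sum>p<m \<alpha>. - \<sigma> (p + s + 2) * lev \<alpha> p) = (if s = 0 then 1 else 0)"
    proof (intro allI impI)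
      fix s assume sl: "s < m \<alpha>"
      have "(\<Sum>q<m \<alpha>. lev \<alpha> q * \<sigma> (s + 1 + q + 1)) = (if s + 1 = 1 then - 1 else 0)"
        unfolding \<sigma>_def by (rule sig_rel[OF finS zer inj linf_nz \<alpha>]) (use sl in auto)
      moreover have "(\<Sum>p<m \<alpha>. - \<sigma> (p + s + 2) * lev \<alpha> p) = - (\<Sum>q<m \<alpha>. lev \<alpha> q * \<sigma> (s + 1 + q + 1))"
        by (simp add: sum_negf[symmetric] algebra_simps)
      ultimately show "(\<Sum>p<m \<alpha>. - \<sigma> (p + s + 2) * lev \<alpha> p) = (if s = 0 then 1 else 0)" by simp
    qed
  qed
  then show ?thesis unfolding \<sigma>_def by simp
qed

lemma kap_add_left: "kap C (x + y) w = kap C x w + kap C y w"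
  unfolding kap_def killing_def by (simp add: distrib_right sum.distrib)

lemma kap_add_right: "kap C w (x + y) = kap C w x + kap C w y"
  unfolding kap_def killing_def by (simp add: distrib_left distrib_right sum.distrib)

lemma kap_scale_left: "kap C (a *s x) w = a * kap C x w"
  unfolding kap_def killing_def by (simp add: sum_distrib_left mult.assoc)

lemma kap_scale_right: "kap C w (a *s x) = a * kap C w x"
  unfolding kap_def killing_def by (simp add: sum_distrib_left algebra_simps)

lemma kap_zero_left: "kap C 0 w = 0"
  unfolding kap_def killing_def by simp

lemma kap_zero_right: "kap C w 0 = 0"
  unfolding kap_def killing_def by simp

lemma kap_sum_left: "kap C (\<Sum>k\<in>F. f k) w = (\<Sum>k\<in>F. kap C (f k) w)"
  by (induction F rule: infinite_finite_induct) (simp_all add: kap_zero_left kap_add_left)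

lemma kap_sum_right: "kap C w (\<Sum>k\<in>F. f k) = (\<Sum>k\<in>F. kap C w (f k))"
  by (induction F rule: infinite_finite_induct) (simp_all add: kap_zero_right kap_add_right)

lemma integral_cmult_c:
  fixes c :: complex
  assumes "f integrable_on S"
  shows "integral S (\<lambda>x. c * f x) = c * integral S f"
  by (rule integral_unique, rule has_integral_mult_right, rule integrable_integral[OF assms])

lemma swap4:
  "(\<Sum>i\<in>I. \<Sum>a\<in>A. \<Sum>p\<in>P a. \<Sum>b\<in>A. \<Sum>q\<in>P b. f i a p b q)
   = (\<Sum>a\<in>A. \<Sum>p\<in>P a. \<Sum>b\<in>A. \<Sum>q\<in>P b. \<Sum>i\<in>I. f i a p b q)"
proof -
  have "(\<Sum>i\<in>I. \<Sum>a\<in>A. \<Sum>p\<in>P a. \<Sum>b\<in>A. \<Sum>q\<in>P b. f i a p b q)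
      = (\<Sum>a\<in>A. \<Sum>i\<in>I. \<Sum>p\<in>P a. \<Sum>b\<in>A. \<Sum>q\<in>P b. f i a p b q)" by (rule sum.swap)
  also have "\<dots> = (\<Sum>a\<in>A. \<Sum>p\<in>P a. \<Sum>i\<in>I. \<Sum>b\<in>A. \<Sum>q\<in>P b. f i a p b q)"
    by (rule sum.cong[OF refl], rule sum.swap)
  also have "\<dots> = (\<Sum>a\<in>A. \<Sum>p\<in>P a. \<Sum>b\<in>A. \<Sum>i\<in>I. \<Sum>q\<in>P b. f i a p b q)"
    by (rule sum.cong[OF refl], rule sum.cong[OF refl], rule sum.swap)
  also have "\<dots> = (\<Sum>a\<in>A. \<Sum>p\<in>P a. \<Sum>b\<in>A. \<Sum>q\<in>P b. \<Sum>i\<in>I. f i a p b q)"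
    by (rule sum.cong[OF refl], rule sum.cong[OF refl], rule sum.cong[OF refl], rule sum.swap)
  finally show ?thesis .
qed

theorem proposition2p3:
  fixes C :: "'n::finite \<Rightarrow> 'n \<Rightarrow> 'n \<Rightarrow> complex"
    and \<tau> :: "complex^'n \<Rightarrow> complex^'n"
    and circ :: bool and L :: real
    and S :: "'s set" and conjs :: "'s \<Rightarrow> 's"
    and m :: "'s \<Rightarrow> nat" and lev :: "'s \<Rightarrow> nat \<Rightarrow> complex" and z :: "'s \<Rightarrow> complex"
    and linf :: real and eta :: "'s \<Rightarrow> nat \<Rightarrow> complex"
    and A :: "('c \<Rightarrow> complex) set"
    and pb :: "('c \<Rightarrow> complex) \<Rightarrow> ('c \<Rightarrow> complex) \<Rightarrow> ('c \<Rightarrow> complex)"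
    and Flds :: "('c \<Rightarrow> real \<Rightarrow> complex) set"
    and J :: "'s \<Rightarrow> nat \<Rightarrow> 'c \<Rightarrow> real \<Rightarrow> complex^'n"
    and P :: "'c \<Rightarrow> complex"
    and \<zeta> :: "nat \<Rightarrow> complex"
  assumes simple: "simple_lie_algebra C"
    and realform: "antilinear_involution C \<tau>"
    and circL: "circ \<longrightarrow> L > 0"
    \<comment> \<open>sites: real sites are the fixed points of conjs, complex sites come in pairs\<close>
    and finS: "finite S"
    and conj_in: "\<forall>\<alpha>\<in>S. conjs \<alpha> \<in> S"
    and conj_inv: "\<forall>\<alpha>\<in>S. conjs (conjs \<alpha>) = \<alpha>"
    and m_pos: "\<forall>\<alpha>\<in>S. m \<alpha> \<ge> 1"
    and m_conj: "\<forall>\<alpha>\<in>S. m (conjs \<alpha>) = m \<alpha>"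
    and lev_conj: "\<forall>\<alpha>\<in>S. \<forall>p<m \<alpha>. lev (conjs \<alpha>) p = cnj (lev \<alpha> p)"
    and lev_top: "\<forall>\<alpha>\<in>S. lev \<alpha> (m \<alpha> - 1) \<noteq> 0"
    and z_conj: "\<forall>\<alpha>\<in>S. z (conjs \<alpha>) = cnj (z \<alpha>)"
    and z_inj: "inj_on z S"
    and linf_nz: "linf \<noteq> 0"
    \<comment> \<open>eta: the (unique) solution of the defining linear system\<close>
    and eta_def: "\<forall>\<alpha>\<in>S. \<forall>q<m \<alpha>. \<forall>r<m \<alpha>.
        (\<Sum>p\<le>m \<alpha> - 1 - r. eta \<alpha> (p + q) * lev \<alpha> (p + r)) = (if q = r then 1 else 0)"
    \<comment> \<open>the Poisson algebra of local observables and its fields\<close>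
    and poisson: "poisson_algebra A pb"
    and smear_in: "\<forall>\<phi>\<in>Flds. \<forall>f. test_fun circ L f \<longrightarrow> smear circ L \<phi> f \<in> A"
    and fld_periodic: "circ \<longrightarrow> (\<forall>\<phi>\<in>Flds. \<forall>c x. \<phi> c (x + L) = \<phi> c x)"
    and J_flds: "\<forall>\<alpha>\<in>S. \<forall>p<m \<alpha>. \<forall>i. (\<lambda>c x. J \<alpha> p c x $ i) \<in> Flds"
    and J_local: "\<forall>\<alpha>\<in>S. \<forall>\<beta>\<in>S. \<forall>q<m \<alpha>. \<forall>r<m \<beta>. \<forall>c.
        (\<lambda>x. kap C (J \<alpha> q c x) (J \<beta> r c x)) integrable_on dom circ L"
    and J_bracket: "\<forall>\<alpha>\<in>S. \<forall>\<beta>\<in>S. \<forall>p<m \<alpha>. \<forall>q<m \<beta>. \<forall>f h.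
        test_fun circ L f \<longrightarrow> test_fun circ L h \<longrightarrow>
        pb (gsmear C circ L (J \<alpha> p) f) (gsmear C circ L (J \<beta> q) h) =
          (if \<alpha> = \<beta> \<and> p + q < m \<alpha> then
             (\<lambda>c. gsmear C circ L (J \<alpha> (p + q)) (\<lambda>x. lb C (f x) (h x)) c
                 + lev \<alpha> (p + q) * integral (dom circ L) (\<lambda>x. kap C (vector_derivative f (at x)) (h x)))
           else (\<lambda>_. 0))"
    and J_real: "\<forall>\<alpha>\<in>S. \<forall>p<m \<alpha>. \<forall>c x. \<tau> (J \<alpha> p c x) = J (conjs \<alpha>) p c x"
    \<comment> \<open>momentum: its Hamiltonian flow is the x-derivative on all fields\<close>
    and P_in: "P \<in> A"
    and momentum: "\<forall>\<phi>\<in>Flds. \<forall>f::real \<Rightarrow> complex. test_fun circ L f \<longrightarrow>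
        pb P (smear circ L \<phi> f) = (\<lambda>c. - smear circ L \<phi> (\<lambda>x. vector_derivative f (at x)) c)"
    \<comment> \<open>suitability\<close>
    and suitable: "P = (\<lambda>c. \<Sum>\<alpha>\<in>S. Dzero C circ L m eta J \<alpha> c)"
    \<comment> \<open>the zeros of the twist function are exactly zeta_0..zeta_(M-1), all simple\<close>
    and zeros: "{w. w \<notin> z ` S \<and> twist S m lev z linf w = 0} = \<zeta> ` {..<(\<Sum>\<alpha>\<in>S. m \<alpha>)}"
    and zeta_inj: "inj_on \<zeta> {..<(\<Sum>\<alpha>\<in>S. m \<alpha>)}"
    and zeta_simple: "\<forall>i<(\<Sum>\<alpha>\<in>S. m \<alpha>). deriv (twist S m lev z linf) (\<zeta> i) \<noteq> 0"
  shows "P = (\<lambda>c. \<Sum>i<(\<Sum>\<alpha>\<in>S. m \<alpha>). Qcharge C circ L S m lev z linf J (\<zeta> i) c)"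

proof -
  define Mn where "Mn = (\<Sum>\<alpha>\<in>S. m \<alpha>)"
  define cw where "cw i = 1 / deriv (twist S m lev z linf) (\<zeta> i)" for i
  define u where "u \<alpha> p w = 1 / (w - z \<alpha>) ^ (p + 1)" for \<alpha> p and w :: complex
  define K where "K \<alpha> p \<beta> q cc = integral (dom circ L) (\<lambda>x. kap C (J \<alpha> p cc x) (J \<beta> q cc x))" for \<alpha> p \<beta> q cc
  have zer: "\<forall>i<(\<Sum>\<alpha>\<in>S. m \<alpha>). \<zeta> i \<notin> z ` S \<and> twist S m lev z linf (\<zeta> i) = 0"
  proof (intro allI impI)
    fix i assume "i < (\<Sum>\<alpha>\<in>S. m \<alpha>)"
    then have "\<zeta> i \<in> {w. w \<notin> z ` S \<and> twist S m lev z linf w = 0}" using zeros by auto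
    then show "\<zeta> i \<notin> z ` S \<and> twist S m lev z linf (\<zeta> i) = 0" by simp
  qed
  have gl: "gaudin_lax S m z J w cc x = (\<Sum>\<alpha>\<in>S. \<Sum>p<m \<alpha>. u \<alpha> p w *s J \<alpha> p cc x)" for w cc x
    unfolding gaudin_lax_def u_def by simp
  have kapG: "kap C (gaudin_lax S m z J w cc x) (gaudin_lax S m z J w cc x)
      = (\<Sum>\<alpha>\<in>S. \<Sum>p<m \<alpha>. \<Sum>\<beta>\<in>S. \<Sum>q<m \<beta>. u \<alpha> p w * u \<beta> q w * kap C (J \<alpha> p cc x) (J \<beta> q cc x))" for w cc x
    unfolding gl kap_sum_left kap_scale_left unfolding kap_sum_right kap_scale_right
    by (simp only: sum_distrib_left mult.assoc)
  have hi: "((\<lambda>x. u \<alpha> p w * u \<beta> q w * kap C (J \<alpha> p cc x) (J \<beta> q cc x)) has_integral (u \<alpha> p w * u \<beta> q w * K \<alpha> p \<beta> q cc)) (dom circ L)"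
    if "\<alpha> \<in> S" "\<beta> \<in> S" "p < m \<alpha>" "q < m \<beta>" for \<alpha> p \<beta> q w cc
    unfolding K_def by (rule has_integral_mult_right, rule integrable_integral) (use J_local that in auto)
  have intG: "integral (dom circ L) (\<lambda>x. kap C (gaudin_lax S m z J w cc x) (gaudin_lax S m z J w cc x))
      = (\<Sum>\<alpha>\<in>S. \<Sum>p<m \<alpha>. \<Sum>\<beta>\<in>S. \<Sum>q<m \<beta>. u \<alpha> p w * u \<beta> q w * K \<alpha> p \<beta> q cc)" for w cc
    unfolding kapG
    by (rule integral_unique) (intro has_integral_sum finite_lessThan finS ballI hi; simp)
  have W: "(\<Sum>i<Mn. cw i * (u \<alpha> p (\<zeta> i) * u \<beta> q (\<zeta> i))) = (if \<beta> = \<alpha> then - eta \<alpha> (p + q) else 0)"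
    if ab: "\<alpha> \<in> S" "\<beta> \<in> S" "p < m \<alpha>" "q < m \<beta>" for \<alpha> p \<beta> q
  proof (cases "\<beta> = \<alpha>")
    case True
    have "eta \<alpha> (p + q) = - (\<Sum>i<Mn. cw i / (\<zeta> i - z \<alpha>) ^ (p + q + 2))"
      unfolding cw_def Mn_def
      by (rule eta_eq[OF finS zer zeta_inj linf_nz ab(1)]) (use m_pos lev_top eta_def ab True in auto)
    moreover have "cw i * (u \<alpha> p (\<zeta> i) * u \<beta> q (\<zeta> i)) = cw i / (\<zeta> i - z \<alpha>) ^ (p + q + 2)" for i
      unfolding u_def True by (simp add: power_add[symmetric])
    ultimately show ?thesis using True by simp
  next
    case False
    have "(\<Sum>i<Mn. cw i / ((\<zeta> i - z \<alpha>) ^ (p+1) * (\<zeta> i - z \<beta>) ^ (q+1))) = 0"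
      unfolding cw_def Mn_def
      by (rule sig_pair[OF finS zer zeta_inj linf_nz ab(1) ab(2)]) (use False ab in auto)
    moreover have "cw i * (u \<alpha> p (\<zeta> i) * u \<beta> q (\<zeta> i)) = cw i / ((\<zeta> i - z \<alpha>) ^ (p+1) * (\<zeta> i - z \<beta>) ^ (q+1))" for i
      unfolding u_def by simp
    ultimately show ?thesis using False by simp
  qed
  show ?thesis
    unfolding suitable
  proof (rule ext)
    fix cc
    have "(\<Sum>i<Mn. Qcharge C circ L S m lev z linf J (\<zeta> i) cc)
        = (\<Sum>i<Mn. \<Sum>\<alpha>\<in>S. \<Sum>p<m \<alpha>. \<Sum>\<beta>\<in>S. \<Sum>q<m \<beta>. - (1/2) * K \<alpha> p \<beta> q cc * (cw i * (u \<alpha> p (\<zeta> i) * u \<beta> q (\<zeta> i))))"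
      unfolding Qcharge_def intG cw_def
      by (simp only: sum_distrib_left) (intro sum.cong refl; simp add: field_simps)
    also have "\<dots> = (\<Sum>\<alpha>\<in>S. \<Sum>p<m \<alpha>. \<Sum>\<beta>\<in>S. \<Sum>q<m \<beta>. \<Sum>i<Mn. - (1/2) * K \<alpha> p \<beta> q cc * (cw i * (u \<alpha> p (\<zeta> i) * u \<beta> q (\<zeta> i))))"
      by (rule swap4)
    also have "\<dots> = (\<Sum>\<alpha>\<in>S. \<Sum>p<m \<alpha>. \<Sum>\<beta>\<in>S. \<Sum>q<m \<beta>. - (1/2) * K \<alpha> p \<beta> q cc * (\<Sum>i<Mn. cw i * (u \<alpha> p (\<zeta> i) * u \<beta> q (\<zeta> i))))"
      by (simp only: sum_distrib_left)
    also have "\<dots> = (\<Sum>\<alpha>\<in>S. \<Sum>p<m \<alpha>. \<Sum>\<beta>\<in>S. if \<beta> = \<alpha> then (\<Sum>q<m \<alpha>. (1/2) * K \<alpha> p \<alpha> q cc * eta \<alpha> (p + q)) else 0)"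
      by (intro sum.cong refl) (auto simp: W)
    also have "\<dots> = (\<Sum>\<alpha>\<in>S. \<Sum>p<m \<alpha>. \<Sum>q<m \<alpha>. (1/2) * K \<alpha> p \<alpha> q cc * eta \<alpha> (p + q))"
      using finS by (intro sum.cong refl) (simp add: sum.delta)
    also have "\<dots> = (\<Sum>\<alpha>\<in>S. Dzero C circ L m eta J \<alpha> cc)"
      unfolding Dzero_def K_def by (intro sum.cong refl) (simp add: sum_distrib_left mult.commute)
    finally show "(\<Sum>\<alpha>\<in>S. Dzero C circ L m eta J \<alpha> cc) = (\<Sum>i<(\<Sum>\<alpha>\<in>S. m \<alpha>). Qcharge C circ L S m lev z linf J (\<zeta> i) cc)"
      unfolding Mn_def by simp
  qed
qed

end
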